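(* Let $A\in\mathbb{C}^{N\times N}$ with $\|A\|\leq1$, with Jordan decomposition $A=P\Lambda P^{-1}$, $\Lambda=\Lambda_1\oplus\cdots\oplus\Lambda_M$ where $\Lambda_j$ is a Jordan block with eigenvalue $\lambda_j$, and suppose every Jordan block has dimension at most $m_{\max}$. Let $\kappa=\min\|P\|\,\|P^{-1}\|$ over all such Jordan decompositions and let $K\geq\kappa$. For $\mu\in\mathbb{C}$ with $|\mu|\leq1$, let $C(\mu)=\sigma_{\min}(A-\mu I)$. Then $$C(\mu)\;\leq\;\min_{j}|\mu-\lambda_j|\;\leq\;3\,(K\,C(\mu))^{1/m_{\max}}.$$
   Context: $\|\cdot\|$ is the spectral norm; $\sigma_{\min}$ denotes the smallest singular value. *)

theory Defs
  imports "Jordan_Normal_Form.Jordan_Normal_Form" "Jordan_Normal_Form.Schur_Decomposition"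
begin

definition vnorm2 :: "complex vec \<Rightarrow> real" where
  "vnorm2 v = sqrt (\<Sum>i<dim_vec v. (cmod (v $ i))\<^sup>2)"

definition spec_norm :: "complex mat \<Rightarrow> real" where
  "spec_norm B = Sup {vnorm2 (B *\<^sub>v v) | v. v \<in> carrier_vec (dim_col B) \<and> vnorm2 v = 1}"

text \<open>Smallest singular value: square root of the smallest eigenvalue of B^H B
  (these eigenvalues are real and nonnegative).\<close>
definition sigma_min :: "complex mat \<Rightarrow> real" where
  "sigma_min B = sqrt (Min {Re k | k. eigenvalue (mat_adjoint B * B) k})"

text \<open>A Jordan decomposition A = P * J * P^{-1} (Q = P^{-1}) with J the block-diagonal
  matrix of the Jordan blocks listed (size, eigenvalue) in n_as, all of positive size.\<close>
definition jordan_decomp :: "complex mat \<Rightarrow> complex mat \<Rightarrow> complex mat \<Rightarrow> (nat \<times> complex) list \<Rightarrow> bool" where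
  "jordan_decomp A P Q n_as \<longleftrightarrow> (\<forall>(n, a) \<in> set n_as. n > 0) \<and>
      similar_mat_wit A (jordan_matrix n_as) P Q"

definition jordan_kappa :: "complex mat \<Rightarrow> real" where
  "jordan_kappa A = Inf {spec_norm P * spec_norm Q | P Q n_as. jordan_decomp A P Q n_as}"

end

theory Submission imports Defs "HOL-Analysis.L2_Norm" "Jordan_Normal_Form.Jordan_Normal_Form_Uniqueness" "Jordan_Normal_Form.Spectral_Radius" begin

lemma vn_L2: "vnorm2 v = L2_set (\<lambda>i. cmod (v $ i)) {..<dim_vec v}"
  by (simp add: vnorm2_def L2_set_def)

lemma vn_nonneg: "vnorm2 v \<ge> 0"
  by (simp add: vn_L2)

lemma mv_index: "i < dim_row M \<Longrightarrow> dim_vec v = dim_col M \<Longrightarrow>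
   (M *\<^sub>v v) $ i = (\<Sum>j<dim_col M. M $$ (i,j) * v $ j)"
  by (simp add: scalar_prod_def atLeast0LessThan)

lemma vn_smult: "vnorm2 (c \<cdot>\<^sub>v v) = cmod c * vnorm2 v"
  by (simp add: vnorm2_def norm_mult power_mult_distrib sum_distrib_left[symmetric] real_sqrt_mult)

lemma vn_zero_iff: "vnorm2 v = 0 \<longleftrightarrow> v = 0\<^sub>v (dim_vec v)"
proof -
  have "vnorm2 v = 0 \<longleftrightarrow> (\<forall>i\<in>{..<dim_vec v}. cmod (v $ i) = 0)"
    unfolding vn_L2 by (rule L2_set_eq_0_iff) simp
  also have "\<dots> \<longleftrightarrow> v = 0\<^sub>v (dim_vec v)" by (auto simp: vec_eq_iff)
  finally show ?thesis .
qed

lemma comp_le_vn: "i < dim_vec v \<Longrightarrow> cmod (v $ i) \<le> vnorm2 v"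
  unfolding vn_L2 by (rule member_le_L2_set) auto

lemma mv_bound: assumes "dim_vec v = dim_col M"
  shows "vnorm2 (M *\<^sub>v v) \<le> (\<Sum>i<dim_row M. \<Sum>j<dim_col M. cmod (M $$ (i,j))) * vnorm2 v"
proof -
  have "vnorm2 (M *\<^sub>v v) \<le> (\<Sum>i<dim_row M. cmod ((M *\<^sub>v v) $ i))"
    unfolding vn_L2 by (rule order_trans[OF L2_set_le_sum]) auto
  also have "\<dots> \<le> (\<Sum>i<dim_row M. (\<Sum>j<dim_col M. cmod (M $$ (i,j))) * vnorm2 v)"
  proof (rule sum_mono)
    fix i assume i: "i \<in> {..<dim_row M}"
    have "cmod ((M *\<^sub>v v) $ i) = cmod (\<Sum>j<dim_col M. M $$ (i,j) * v $ j)"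
      using i assms mv_index[of i M v] by simp
    also have "\<dots> \<le> (\<Sum>j<dim_col M. cmod (M $$ (i,j)) * cmod (v $ j))"
      by (rule order_trans[OF norm_sum]) (simp add: norm_mult)
    also have "\<dots> \<le> (\<Sum>j<dim_col M. cmod (M $$ (i,j)) * vnorm2 v)"
      by (rule sum_mono, rule mult_left_mono, rule comp_le_vn) (use assms in auto)
    finally show "cmod ((M *\<^sub>v v) $ i) \<le> (\<Sum>j<dim_col M. cmod (M $$ (i,j))) * vnorm2 v"
      by (simp add: sum_distrib_right)
  qed
  finally show ?thesis by (simp add: sum_distrib_right)
qed

lemma spec_bdd: "bdd_above {vnorm2 (B *\<^sub>v v) | v. v \<in> carrier_vec (dim_col B) \<and> vnorm2 v = 1}"
proof (rule bdd_aboveI[where M = "\<Sum>i<dim_row B. \<Sum>j<dim_col B. cmod (B $$ (i,j))"])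
  fix x assume "x \<in> {vnorm2 (B *\<^sub>v v) | v. v \<in> carrier_vec (dim_col B) \<and> vnorm2 v = 1}"
  then obtain v where "x = vnorm2 (B *\<^sub>v v)" "v \<in> carrier_vec (dim_col B)" "vnorm2 v = 1" by auto
  with mv_bound[of v B] show "x \<le> (\<Sum>i<dim_row B. \<Sum>j<dim_col B. cmod (B $$ (i,j)))" by auto
qed

lemma spec_le: assumes v: "v \<in> carrier_vec (dim_col B)"
  shows "vnorm2 (B *\<^sub>v v) \<le> spec_norm B * vnorm2 v"
proof (cases "vnorm2 v = 0")
  case True
  hence "v = 0\<^sub>v (dim_col B)" using v vn_zero_iff by auto
  hence "B *\<^sub>v v = 0\<^sub>v (dim_row B)" by (auto simp: vec_eq_iff scalar_prod_def)
  hence "vnorm2 (B *\<^sub>v v) = 0" using vn_zero_iff by auto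
  thus ?thesis using True by simp
next
  case False
  hence pos: "vnorm2 v > 0" using vn_nonneg[of v] by linarith
  define u where "u = (1 / of_real (vnorm2 v)) \<cdot>\<^sub>v v"
  have u: "u \<in> carrier_vec (dim_col B)" "vnorm2 u = 1"
    using v pos by (auto simp: u_def vn_smult norm_divide)
  have Bu: "B *\<^sub>v u = (1 / of_real (vnorm2 v)) \<cdot>\<^sub>v (B *\<^sub>v v)"
    unfolding u_def by (rule mult_mat_vec[OF _ v]) auto
  have "vnorm2 (B *\<^sub>v u) \<le> spec_norm B"
    unfolding spec_norm_def by (rule cSup_upper[OF _ spec_bdd]) (use u in blast)
  hence "vnorm2 (B *\<^sub>v v) / vnorm2 v \<le> spec_norm B"
    using pos by (simp add: Bu vn_smult norm_divide)
  thus ?thesis using pos by (simp add: divide_le_eq mult.commute)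
qed

lemma spec_nonneg: assumes "dim_col B > 0" shows "spec_norm B \<ge> 0"
proof -
  let ?v = "unit_vec (dim_col B) 0 :: complex vec"
  have v: "?v \<in> carrier_vec (dim_col B)" by simp
  have "vnorm2 ?v \<noteq> 0" using assms by (subst vn_zero_iff) (auto simp: vec_eq_iff)
  hence "vnorm2 ?v > 0" using vn_nonneg[of ?v] by linarith
  with spec_le[OF v] vn_nonneg[of "B *\<^sub>v ?v"] show ?thesis
    by (meson less_le_not_le order_trans zero_le_mult_iff)
qed

definition ip :: "complex vec \<Rightarrow> complex vec \<Rightarrow> complex" where
  "ip a b = (\<Sum>i<dim_vec a. cnj (a $ i) * b $ i)"

lemma ip_self: "ip a a = of_real ((vnorm2 a)\<^sup>2)"
proof -
  have "ip a a = (\<Sum>i<dim_vec a. of_real ((cmod (a $ i))\<^sup>2))"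
    unfolding ip_def by (intro sum.cong refl) (metis complex_norm_square mult.commute of_real_power)
  also have "\<dots> = of_real (\<Sum>i<dim_vec a. (cmod (a $ i))\<^sup>2)" by simp
  also have "(\<Sum>i<dim_vec a. (cmod (a $ i))\<^sup>2) = (vnorm2 a)\<^sup>2"
    unfolding vnorm2_def by (simp add: sum_nonneg)
  finally show ?thesis .
qed

lemma ip_cnj: "dim_vec a = dim_vec b \<Longrightarrow> ip a b = cnj (ip b a)"
  unfolding ip_def by (simp add: mult.commute)

lemma ip_CS: "dim_vec a = dim_vec b \<Longrightarrow> cmod (ip a b) \<le> vnorm2 a * vnorm2 b"
proof -
  assume d: "dim_vec a = dim_vec b"
  have "cmod (ip a b) \<le> (\<Sum>i<dim_vec a. \<bar>cmod (a $ i)\<bar> * \<bar>cmod (b $ i)\<bar>)"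
    unfolding ip_def by (rule order_trans[OF norm_sum]) (simp add: norm_mult)
  also have "\<dots> \<le> L2_set (\<lambda>i. cmod (a $ i)) {..<dim_vec a} * L2_set (\<lambda>i. cmod (b $ i)) {..<dim_vec a}"
    by (rule L2_set_mult_ineq)
  finally show ?thesis using d by (simp add: vn_L2)
qed

lemma adj_carrier: "B \<in> carrier_mat m n \<Longrightarrow> mat_adjoint B \<in> carrier_mat n m"
  unfolding mat_adjoint_def by (auto simp: mat_of_rows_def)

lemma adj_index: "B \<in> carrier_mat m n \<Longrightarrow> i < n \<Longrightarrow> j < m \<Longrightarrow> mat_adjoint B $$ (i,j) = cnj (B $$ (j,i))"
  unfolding mat_adjoint_def by (auto simp: mat_of_rows_def)

lemma ip_adj: assumes B: "B \<in> carrier_mat m n" and a: "a \<in> carrier_vec m" and b: "b \<in> carrier_vec n"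
  shows "ip a (B *\<^sub>v b) = ip (mat_adjoint B *\<^sub>v a) b"
proof -
  have "ip a (B *\<^sub>v b) = (\<Sum>i<m. cnj (a $ i) * (\<Sum>j<n. B $$ (i,j) * b $ j))"
    unfolding ip_def using a b B mv_index[of _ B b] by (intro sum.cong) auto
  also have "\<dots> = (\<Sum>i<m. \<Sum>j<n. cnj (a $ i) * B $$ (i,j) * b $ j)"
    by (simp add: sum_distrib_left mult.assoc)
  also have "\<dots> = (\<Sum>j<n. \<Sum>i<m. cnj (a $ i) * B $$ (i,j) * b $ j)"
    by (rule sum.swap)
  also have "\<dots> = (\<Sum>j<n. cnj (\<Sum>i<m. cnj (B $$ (i,j)) * a $ i) * b $ j)"
    by (simp add: sum_distrib_right sum_distrib_left ac_simps)
  also have "\<dots> = ip (mat_adjoint B *\<^sub>v a) b"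
    unfolding ip_def using a b B adj_carrier[OF B] mv_index[of _ "mat_adjoint B" a] adj_index[OF B]
    by (intro sum.cong) auto
  finally show ?thesis .
qed

lemma quad_H: assumes B: "B \<in> carrier_mat n n" and w: "w \<in> carrier_vec n"
  shows "ip w ((mat_adjoint B * B) *\<^sub>v w) = of_real ((vnorm2 (B *\<^sub>v w))\<^sup>2)"
proof -
  have Bw: "B *\<^sub>v w \<in> carrier_vec n" using B w by auto
  have "(mat_adjoint B * B) *\<^sub>v w = mat_adjoint B *\<^sub>v (B *\<^sub>v w)"
    by (rule assoc_mult_mat_vec[OF adj_carrier[OF B] B w])
  hence "ip w ((mat_adjoint B * B) *\<^sub>v w) = cnj (ip (mat_adjoint B *\<^sub>v (B *\<^sub>v w)) w)"
    using ip_cnj[of w] adj_carrier[OF B] Bw w by simp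
  also have "\<dots> = cnj (ip (B *\<^sub>v w) (B *\<^sub>v w))" using ip_adj[OF B Bw w] by simp
  finally show ?thesis by (simp add: ip_self)
qed

lemma ip_smult_right: "dim_vec b = dim_vec a \<Longrightarrow> ip a (c \<cdot>\<^sub>v b) = c * ip a b"
  unfolding ip_def by (simp add: sum_distrib_left mult.left_commute)

lemma eig_H: assumes B: "B \<in> carrier_mat n n" and ev: "eigenvalue (mat_adjoint B * B) k"
  shows "\<exists>v \<in> carrier_vec n. vnorm2 v = 1 \<and> k = of_real ((vnorm2 (B *\<^sub>v v))\<^sup>2)"
proof -
  have H: "mat_adjoint B * B \<in> carrier_mat n n" using adj_carrier[OF B] B by auto
  from ev obtain w where w: "w \<in> carrier_vec n" "w \<noteq> 0\<^sub>v n" "(mat_adjoint B * B) *\<^sub>v w = k \<cdot>\<^sub>v w"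
    unfolding eigenvalue_def eigenvector_def using H by auto
  have nw: "vnorm2 w > 0" using w vn_zero_iff[of w] vn_nonneg[of w] by force
  have "k * of_real ((vnorm2 w)\<^sup>2) = of_real ((vnorm2 (B *\<^sub>v w))\<^sup>2)"
    using quad_H[OF B w(1)] w(3) by (simp add: ip_smult_right ip_self)
  hence k: "k = of_real ((vnorm2 (B *\<^sub>v w))\<^sup>2 / (vnorm2 w)\<^sup>2)"
    using nw by (simp add: field_simps)
  define v where "v = (1 / of_real (vnorm2 w)) \<cdot>\<^sub>v w"
  have v: "v \<in> carrier_vec n" "vnorm2 v = 1" using w nw by (auto simp: v_def vn_smult norm_divide)
  have "B *\<^sub>v v = (1 / of_real (vnorm2 w)) \<cdot>\<^sub>v (B *\<^sub>v w)"
    unfolding v_def by (rule mult_mat_vec[OF B w(1)])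
  hence "vnorm2 (B *\<^sub>v v) = vnorm2 (B *\<^sub>v w) / vnorm2 w" using nw by (simp add: vn_smult norm_divide)
  hence "k = of_real ((vnorm2 (B *\<^sub>v v))\<^sup>2)" using k by (simp add: power_divide)
  thus ?thesis using v by blast
qed

lemma spec_fin: assumes B: "B \<in> carrier_mat n n" and n: "n > 0"
  shows "finite {Re k | k. eigenvalue (mat_adjoint B * B) k}"
    "{Re k | k. eigenvalue (mat_adjoint B * B) k} \<noteq> {}"
proof -
  have H: "mat_adjoint B * B \<in> carrier_mat n n" using adj_carrier[OF B] B by auto
  have eq: "{Re k | k. eigenvalue (mat_adjoint B * B) k} = Re ` spectrum (mat_adjoint B * B)"
    unfolding spectrum_def by auto
  show "finite {Re k | k. eigenvalue (mat_adjoint B * B) k}"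
    unfolding eq using card_finite_spectrum(1)[OF H] by simp
  show "{Re k | k. eigenvalue (mat_adjoint B * B) k} \<noteq> {}"
    unfolding eq using spectrum_non_empty[OF H n] by simp
qed

lemma sigma_min_attained: assumes B: "B \<in> carrier_mat n n" and n: "n > 0"
  shows "\<exists>v \<in> carrier_vec n. vnorm2 v = 1 \<and> sigma_min B = vnorm2 (B *\<^sub>v v)"
proof -
  let ?S = "{Re k | k. eigenvalue (mat_adjoint B * B) k}"
  have "Min ?S \<in> ?S" using spec_fin[OF B n] by (rule Min_in)
  then obtain k where k: "eigenvalue (mat_adjoint B * B) k" "Min ?S = Re k" by auto
  from eig_H[OF B k(1)] obtain v where v: "v \<in> carrier_vec n" "vnorm2 v = 1"
    "k = of_real ((vnorm2 (B *\<^sub>v v))\<^sup>2)" by auto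
  have "sigma_min B = sqrt ((vnorm2 (B *\<^sub>v v))\<^sup>2)" unfolding sigma_min_def k(2) v(3) by simp
  thus ?thesis using v vn_nonneg by auto
qed

lemma smult_mat_vec: assumes "M \<in> carrier_mat n m" "w \<in> carrier_vec m"
  shows "(c \<cdot>\<^sub>m M) *\<^sub>v w = c \<cdot>\<^sub>v (M *\<^sub>v w)"
  using assms by (intro eq_vecI) (auto simp del: index_mult_mat_vec simp add: mv_index sum_distrib_left ac_simps)

lemma ip_minus_right: "dim_vec b = dim_vec a \<Longrightarrow> dim_vec c = dim_vec a \<Longrightarrow> ip a (b - c) = ip a b - ip a c"
  unfolding ip_def by (simp add: algebra_simps sum_subtractf)

lemma pow_mat_add: assumes X: "X \<in> carrier_mat n n"
  shows "X ^\<^sub>m (a + b) = X ^\<^sub>m a * X ^\<^sub>m b"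
proof (induction b)
  case 0 show ?case using X by simp
next
  case (Suc b)
  have "X ^\<^sub>m (a + Suc b) = (X ^\<^sub>m a * X ^\<^sub>m b) * X" using Suc by simp
  also have "\<dots> = X ^\<^sub>m a * (X ^\<^sub>m b * X)"
    by (rule assoc_mult_mat[of _ n n _ n _ n]) (use X in auto)
  finally show ?case by simp
qed

lemma pow_mat_one: "X \<in> carrier_mat n n \<Longrightarrow> X ^\<^sub>m 1 = X"
  by simp

lemma herm_pow: assumes X: "X \<in> carrier_mat n n" and h: "mat_adjoint X = X"
  and a: "a \<in> carrier_vec n" and b: "b \<in> carrier_vec n"
  shows "ip a (X ^\<^sub>m k *\<^sub>v b) = ip (X ^\<^sub>m k *\<^sub>v a) b"
  using b
proof (induction k arbitrary: b)
  case 0 thus ?case using a X by simp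
next
  case (Suc k b)
  have Xb: "X *\<^sub>v b \<in> carrier_vec n" using X Suc.prems by auto
  have Xka: "X ^\<^sub>m k *\<^sub>v a \<in> carrier_vec n" using X a by (metis mult_mat_vec_carrier pow_carrier_mat)
  have "X ^\<^sub>m Suc k *\<^sub>v b = X ^\<^sub>m k *\<^sub>v (X *\<^sub>v b)"
    using assoc_mult_mat_vec[of "X ^\<^sub>m k" n n X n b] X Suc.prems by simp
  hence "ip a (X ^\<^sub>m Suc k *\<^sub>v b) = ip (X ^\<^sub>m k *\<^sub>v a) (X *\<^sub>v b)" using Suc.IH[OF Xb] by simp
  also have "\<dots> = ip (X *\<^sub>v (X ^\<^sub>m k *\<^sub>v a)) b" using ip_adj[OF X Xka Suc.prems] h by simp
  also have "X *\<^sub>v (X ^\<^sub>m k *\<^sub>v a) = (X * X ^\<^sub>m k) *\<^sub>v a"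
    using assoc_mult_mat_vec[of X n n "X ^\<^sub>m k" n a] X a by simp
  also have "X * X ^\<^sub>m k = X ^\<^sub>m Suc k"
    using pow_mat_add[OF X, of 1 k] X by simp
  finally show ?case .
qed

lemma quad_bound: assumes Y: "Y \<in> carrier_mat n n" and u: "u \<in> carrier_vec n" "vnorm2 u = 1"
  and nb: "norm_bound Y M"
  shows "cmod (ip u (Y *\<^sub>v u)) \<le> real n * real n * M"
proof -
  have "cmod (ip u (Y *\<^sub>v u)) \<le> vnorm2 u * vnorm2 (Y *\<^sub>v u)" using Y u by (intro ip_CS) auto
  also have "\<dots> = vnorm2 (Y *\<^sub>v u)" using u by simp
  also have "\<dots> \<le> (\<Sum>i<n. \<Sum>j<n. cmod (Y $$ (i,j))) * vnorm2 u" using mv_bound[of u Y] Y u by auto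
  also have "\<dots> = (\<Sum>i<n. \<Sum>j<n. cmod (Y $$ (i,j)))" using u by simp
  also have "\<dots> \<le> (\<Sum>i<n. \<Sum>j<n. M)" using u nb Y unfolding norm_bound_def
    by (intro sum_mono) auto
  finally show ?thesis by simp
qed

lemma rayleigh: assumes B: "B \<in> carrier_mat n n" and n: "n > 0"
  and u: "u \<in> carrier_vec n" "vnorm2 u = 1"
  shows "sigma_min B \<le> vnorm2 (B *\<^sub>v u)"
proof -
  define H where "H = mat_adjoint B * B"
  have H: "H \<in> carrier_mat n n" unfolding H_def using adj_carrier[OF B] B by auto
  define S where "S = {Re k | k. eigenvalue H k}"
  have finS: "finite S" "S \<noteq> {}" unfolding S_def H_def using spec_fin[OF B n] by auto
  define kmin where "kmin = Min S"
  define kmax where "kmax = Max S"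
  define c where "c = (vnorm2 (B *\<^sub>v u))\<^sup>2"
  have c0: "c \<ge> 0" unfolding c_def by simp
  have Sbounds: "kmin \<le> x \<and> x \<le> kmax" if "x \<in> S" for x
    using finS that unfolding kmin_def kmax_def by auto
  have "kmin \<le> c"
  proof (rule ccontr)
    assume "\<not> kmin \<le> c"
    hence ck: "c < kmin" by simp
    have kk: "kmin \<le> kmax" using Sbounds finS Min_in unfolding kmin_def by blast
    define t where "t = kmax + 1"
    define r where "r = t - c"
    define r' where "r' = t - (c + kmin) / 2"
    have r'pos: "r' > 0" and rr': "r' < r" unfolding r'_def r_def t_def using ck kk by auto
    define X where "X = (complex_of_real (1 / r')) \<cdot>\<^sub>m (complex_of_real t \<cdot>\<^sub>m 1\<^sub>m n - H)"
    have X: "X \<in> carrier_mat n n" unfolding X_def using H by auto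
    have Xv: "X *\<^sub>v w = complex_of_real (1 / r') \<cdot>\<^sub>v (complex_of_real t \<cdot>\<^sub>v w - H *\<^sub>v w)"
      if w: "w \<in> carrier_vec n" for w
    proof -
      have "X *\<^sub>v w = complex_of_real (1 / r') \<cdot>\<^sub>v ((complex_of_real t \<cdot>\<^sub>m 1\<^sub>m n - H) *\<^sub>v w)"
        unfolding X_def by (rule smult_mat_vec[of _ n n]) (use H w in auto)
      also have "(complex_of_real t \<cdot>\<^sub>m 1\<^sub>m n - H) *\<^sub>v w = complex_of_real t \<cdot>\<^sub>v w - H *\<^sub>v w"
        using minus_mult_distrib_mat_vec[of "complex_of_real t \<cdot>\<^sub>m 1\<^sub>m n" n n H w] H w
          smult_mat_vec[of "1\<^sub>m n" n n w "complex_of_real t"] by simp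
      finally show ?thesis .
    qed
    have herm: "mat_adjoint X = X"
    proof (rule eq_matI)
      show "dim_row (mat_adjoint X) = dim_row X" "dim_col (mat_adjoint X) = dim_col X"
        using adj_carrier[OF X] X by auto
      fix i j assume ij: "i < dim_row X" "j < dim_col X"
      hence ij': "i < n" "j < n" using X by auto
      have Hij: "H $$ (j, i) = cnj (H $$ (i, j))"
        unfolding H_def using ij' B adj_carrier[OF B] adj_index[OF B]
        by (simp add: scalar_prod_def ac_simps)
      show "mat_adjoint X $$ (i, j) = X $$ (i, j)"
        using adj_index[OF X ij'] ij' H Hij by (simp add: X_def)
    qed
    have sr: "spectral_radius X < 1"
    proof -
      from spectral_radius_mem_max(1)[OF X n] obtain e where e: "eigenvalue X e"
        and sre: "spectral_radius X = cmod e" unfolding spectrum_def by auto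
      from e obtain w where w: "w \<in> carrier_vec n" "w \<noteq> 0\<^sub>v n" "X *\<^sub>v w = e \<cdot>\<^sub>v w"
        unfolding eigenvalue_def eigenvector_def using X by auto
      have Hw: "H *\<^sub>v w = (complex_of_real t - complex_of_real r' * e) \<cdot>\<^sub>v w"
      proof (rule eq_vecI)
        fix i assume i: "i < dim_vec ((complex_of_real t - complex_of_real r' * e) \<cdot>\<^sub>v w)"
        hence i': "i < n" using w by auto
        have "(X *\<^sub>v w) $ i = (e \<cdot>\<^sub>v w) $ i" using w by simp
        hence "complex_of_real (1 / r') * (complex_of_real t * w $ i - (H *\<^sub>v w) $ i) = e * w $ i"
          using Xv[OF w(1)] i' w H by simp
        thus "(H *\<^sub>v w) $ i = ((complex_of_real t - complex_of_real r' * e) \<cdot>\<^sub>v w) $ i"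
          using i' w r'pos by (simp add: field_simps)
      qed (use H w in auto)
      have "eigenvalue H (complex_of_real t - complex_of_real r' * e)"
        unfolding eigenvalue_def eigenvector_def using w Hw H by auto
      then obtain v where v: "v \<in> carrier_vec n" "vnorm2 v = 1"
        "complex_of_real t - complex_of_real r' * e = of_real ((vnorm2 (B *\<^sub>v v))\<^sup>2)"
        using eig_H[OF B] unfolding H_def by blast
      define k0 where "k0 = (vnorm2 (B *\<^sub>v v))\<^sup>2"
      have "k0 \<in> S" unfolding S_def k0_def
        using \<open>eigenvalue H _\<close> v(3) by force
      hence k0: "kmin \<le> k0" "k0 \<le> kmax" using Sbounds by auto
      have "e = complex_of_real ((t - k0) / r')" using v(3) r'pos unfolding k0_def
        by (simp add: field_simps)
      hence "cmod e = \<bar>(t - k0) / r'\<bar>" by (simp only: norm_of_real)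
      also have "\<dots> = \<bar>t - k0\<bar> / r'" using r'pos by simp
      also have "\<dots> < 1" using k0 r'pos ck unfolding r'_def t_def by (auto simp: abs_if field_simps)
      finally show ?thesis using sre by simp
    qed
    from spectral_radius_jnf_norm_bound_less_1_upper_triangular[OF X sr]
    obtain M where M: "\<And>k. norm_bound (X ^\<^sub>m k) M" by auto
    define q where "q k = ip u (X ^\<^sub>m k *\<^sub>v u)" for k
    define \<rho> where "\<rho> = r / r'"
    have rho1: "\<rho> > 1" unfolding \<rho>_def using r'pos rr' by simp
    have q1: "q 1 = complex_of_real \<rho>"
    proof -
      have "q 1 = ip u (X *\<^sub>v u)" unfolding q_def using X by simp
      also have "\<dots> = complex_of_real (1 / r') * (complex_of_real t * ip u u - ip u (H *\<^sub>v u))"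
        using Xv[OF u(1)] u H by (simp add: ip_smult_right ip_minus_right)
      also have "ip u (H *\<^sub>v u) = complex_of_real c" unfolding H_def c_def using quad_H[OF B u(1)] .
      also have "ip u u = 1" using u by (simp add: ip_self)
      finally show ?thesis unfolding \<rho>_def r_def by (simp add: field_simps)
    qed
    have q2: "cmod (q (k + k)) \<ge> (cmod (q k))\<^sup>2" for k
    proof -
      have Xku: "X ^\<^sub>m k *\<^sub>v u \<in> carrier_vec n" using X u by (metis mult_mat_vec_carrier pow_carrier_mat)
      have "X ^\<^sub>m (k + k) *\<^sub>v u = X ^\<^sub>m k *\<^sub>v (X ^\<^sub>m k *\<^sub>v u)"
        using pow_mat_add[OF X, of k k] assoc_mult_mat_vec[of "X ^\<^sub>m k" n n "X ^\<^sub>m k" n u] X u by simp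
      hence "q (k + k) = ip (X ^\<^sub>m k *\<^sub>v u) (X ^\<^sub>m k *\<^sub>v u)"
        unfolding q_def using herm_pow[OF X herm u(1) Xku] by simp
      hence qq: "q (k + k) = of_real ((vnorm2 (X ^\<^sub>m k *\<^sub>v u))\<^sup>2)" by (simp add: ip_self)
      have "cmod (q k) \<le> vnorm2 u * vnorm2 (X ^\<^sub>m k *\<^sub>v u)" unfolding q_def
        using ip_CS[of u "X ^\<^sub>m k *\<^sub>v u"] X u by auto
      hence "cmod (q k) \<le> vnorm2 (X ^\<^sub>m k *\<^sub>v u)" using u by simp
      hence "(cmod (q k))\<^sup>2 \<le> (vnorm2 (X ^\<^sub>m k *\<^sub>v u))\<^sup>2" by (simp add: power_mono)
      moreover have "cmod (q (k + k)) = (vnorm2 (X ^\<^sub>m k *\<^sub>v u))\<^sup>2"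
        unfolding qq norm_of_real by simp
      ultimately show ?thesis by simp
    qed
    have grow: "cmod (q (2 ^ j)) \<ge> \<rho> ^ (2 ^ j)" for j
    proof (induction j)
      case 0 thus ?case using q1 rho1 by simp
    next
      case (Suc j)
      have "\<rho> ^ (2 ^ Suc j) = (\<rho> ^ (2 ^ j))\<^sup>2" by (simp add: power_mult[symmetric] mult.commute)
      also have "\<dots> \<le> (cmod (q (2 ^ j)))\<^sup>2" using Suc rho1 by (intro power_mono) auto
      also have "\<dots> \<le> cmod (q (2 ^ j + 2 ^ j))" by (rule q2)
      finally show ?case by (simp add: mult_2)
    qed
    have qb: "cmod (q k) \<le> real n * real n * M" for k
      unfolding q_def by (rule quad_bound[OF _ u M]) (use X in auto)
    obtain j :: nat where j: "real n * real n * M / (\<rho> - 1) < real j" using reals_Archimedean2 by blast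
    have "1 + real (2 ^ j) * (\<rho> - 1) \<le> (1 + (\<rho> - 1)) ^ (2 ^ j)"
      by (rule Bernoulli_inequality) (use rho1 in simp)
    hence "1 + real (2 ^ j) * (\<rho> - 1) \<le> \<rho> ^ (2 ^ j)" by simp
    moreover have "real j \<le> real (2 ^ j)" by (metis less_exp less_imp_le of_nat_le_iff)
    moreover have "real n * real n * M < real j * (\<rho> - 1)" using j rho1 by (simp add: field_simps)
    ultimately have "real n * real n * M < \<rho> ^ (2 ^ j)"
      using rho1 by (smt (verit) mult_right_mono)
    thus False using grow[of j] qb[of "2 ^ j"] by simp
  qed
  have "sigma_min B = sqrt kmin" unfolding sigma_min_def kmin_def S_def H_def ..
  also have "\<dots> \<le> sqrt c" using \<open>kmin \<le> c\<close> by simp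
  also have "\<dots> = vnorm2 (B *\<^sub>v u)" unfolding c_def using vn_nonneg by simp
  finally show ?thesis .
qed


fun jev :: "(nat \<times> complex) list \<Rightarrow> nat \<Rightarrow> complex" where
  "jev [] i = 0"
| "jev ((n,a) # ns) i = (if i < n then a else jev ns (i - n))"

fun jrem :: "(nat \<times> complex) list \<Rightarrow> nat \<Rightarrow> nat" where
  "jrem [] i = 0"
| "jrem ((n,a) # ns) i = (if i < n then n - 1 - i else jrem ns (i - n))"

lemma jm_cons: "jordan_matrix ((n,a) # ns) = four_block_mat (jordan_block n a)
   (0\<^sub>m n (sum_list (map fst ns))) (0\<^sub>m (sum_list (map fst ns)) n) (jordan_matrix ns)"
proof -
  have "jordan_matrix ((n,a) # ns) = (let B = jordan_matrix ns in four_block_mat (jordan_block n a)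
     (0\<^sub>m n (dim_col B)) (0\<^sub>m (dim_row B) n) B)"
    unfolding jordan_matrix_def by simp
  thus ?thesis by (simp add: Let_def)
qed

lemma jm_cons_index: assumes "i < n + sum_list (map fst ns)" "j < n + sum_list (map fst ns)"
  shows "jordan_matrix ((n,a) # ns) $$ (i,j) = (if i < n then if j < n then jordan_block n a $$ (i,j) else 0
     else if j < n then 0 else jordan_matrix ns $$ (i-n, j-n))"
  unfolding jm_cons using assms by (subst index_mat_four_block) auto

lemma jm_index: "i < sum_list (map fst ns) \<Longrightarrow> j < sum_list (map fst ns) \<Longrightarrow>
  jordan_matrix ns $$ (i,j) = (if i = j then jev ns i else if j = Suc i \<and> 0 < jrem ns i then 1 else 0)"
proof (induction ns arbitrary: i j)
  case Nil thus ?case by simp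
next
  case (Cons na ns)
  obtain n a where na: "na = (n,a)" by (cases na)
  have pr: "i < n + sum_list (map fst ns)" "j < n + sum_list (map fst ns)" using Cons.prems na by auto
  note ci = jm_cons_index[OF pr, of a]
  show ?case
  proof (cases "i < n")
    case True
    show ?thesis
    proof (cases "j < n")
      case True2: True
      show ?thesis unfolding na ci using True True2 by simp
    next
      case False2: False
      show ?thesis unfolding na ci using True False2 by simp
    qed
  next
    case False
    show ?thesis
    proof (cases "j < n")
      case True2: True thus ?thesis unfolding na ci using False by simp
    next
      case False2: False
      have "jordan_matrix ns $$ (i - n, j - n) = (if i - n = j - n then jev ns (i - n)
         else if j - n = Suc (i - n) \<and> 0 < jrem ns (i - n) then 1 else 0)"
        using pr False False2 by (intro Cons.IH) auto
      moreover have "(i - n = j - n) = (i = j)" "(j - n = Suc (i - n)) = (j = Suc i)" using False False2 by auto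
      ultimately show ?thesis unfolding na ci using False False2 by simp
    qed
  qed
qed

lemma jev_mem: "i < sum_list (map fst ns) \<Longrightarrow> \<exists>n. (n, jev ns i) \<in> set ns"
proof (induction ns arbitrary: i)
  case Nil thus ?case by simp
next
  case (Cons na ns)
  obtain n a where na: "na = (n,a)" by (cases na)
  show ?case
  proof (cases "i < n")
    case True thus ?thesis unfolding na by auto
  next
    case False
    hence "i - n < sum_list (map fst ns)" using Cons.prems na by auto
    from Cons.IH[OF this] False show ?thesis unfolding na by auto
  qed
qed

lemma jrem_lt: "i < sum_list (map fst ns) \<Longrightarrow> \<exists>n a. (n,a) \<in> set ns \<and> jrem ns i < n"
proof (induction ns arbitrary: i)
  case Nil thus ?case by simp
next
  case (Cons na ns)
  obtain n a where na: "na = (n,a)" by (cases na)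
  show ?case
  proof (cases "i < n")
    case True thus ?thesis unfolding na by auto
  next
    case False
    hence "i - n < sum_list (map fst ns)" using Cons.prems na by auto
    from Cons.IH[OF this] False show ?thesis unfolding na by auto
  qed
qed

lemma jrem_suc: "i < sum_list (map fst ns) \<Longrightarrow> 0 < jrem ns i \<Longrightarrow>
   Suc i < sum_list (map fst ns) \<and> jrem ns (Suc i) = jrem ns i - 1"
proof (induction ns arbitrary: i)
  case Nil thus ?case by simp
next
  case (Cons na ns)
  obtain n a where na: "na = (n,a)" by (cases na)
  show ?case
  proof (cases "i < n")
    case True thus ?thesis using Cons.prems unfolding na by auto
  next
    case False
    have s: "Suc i - n = Suc (i - n)" using False by auto
    have i: "i - n < sum_list (map fst ns)" "0 < jrem ns (i - n)" using Cons.prems False na by auto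
    from Cons.IH[OF i] have "Suc (i - n) < sum_list (map fst ns)" "jrem ns (Suc (i - n)) = jrem ns (i - n) - 1"
      by auto
    thus ?thesis using s False unfolding na by auto
  qed
qed


lemma L2_set_sum: "finite K \<Longrightarrow> L2_set (\<lambda>i. \<Sum>k\<in>K. f k i) A \<le> (\<Sum>k\<in>K. L2_set (f k) A)"
proof (induction K rule: finite_induct)
  case empty thus ?case by (simp add: L2_set_0')
next
  case (insert x K)
  have "L2_set (\<lambda>i. \<Sum>k\<in>insert x K. f k i) A = L2_set (\<lambda>i. f x i + (\<Sum>k\<in>K. f k i)) A"
    using insert by simp
  also have "\<dots> \<le> L2_set (f x) A + L2_set (\<lambda>i. \<Sum>k\<in>K. f k i) A" by (rule L2_set_triangle_ineq)
  also have "\<dots> \<le> L2_set (f x) A + (\<Sum>k\<in>K. L2_set (f k) A)" using insert by simp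
  finally show ?case using insert by simp
qed


lemma L2_shift: fixes f :: "nat \<Rightarrow> real" assumes "\<And>j. j \<ge> N \<Longrightarrow> f j = 0"
  shows "L2_set (\<lambda>i. f (i + k)) {..<N} \<le> L2_set f {..<N}"
proof -
  have "(\<Sum>i<N. (f (i + k))\<^sup>2) = (\<Sum>j\<in>{k..<N+k}. (f j)\<^sup>2)"
    using sum.shift_bounds_nat_ivl[of "\<lambda>j. (f j)\<^sup>2" 0 k N] by (simp add: atLeast0LessThan)
  also have "\<dots> \<le> (\<Sum>j\<in>{0..<N+k}. (f j)\<^sup>2)" by (rule sum_mono2) auto
  also have "\<dots> = (\<Sum>j\<in>{0..<N}. (f j)\<^sup>2) + (\<Sum>j\<in>{N..<N+k}. (f j)\<^sup>2)"
    by (rule sum.atLeastLessThan_concat[symmetric]) auto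
  also have "(\<Sum>j\<in>{N..<N+k}. (f j)\<^sup>2) = 0" using assms by simp
  finally have "(\<Sum>i<N. (f (i + k))\<^sup>2) \<le> (\<Sum>j<N. (f j)\<^sup>2)" by (simp add: atLeast0LessThan)
  thus ?thesis unfolding L2_set_def by simp
qed

lemma jordan_bound:
  fixes ns :: "(nat \<times> complex) list" and \<mu> :: complex and \<delta> :: real and m :: nat
  assumes dpos: "\<delta> > 0"
    and hyp: "\<And>n a. (n,a) \<in> set ns \<Longrightarrow> \<delta> \<le> cmod (a - \<mu>) \<and> n \<le> m"
    and w: "w \<in> carrier_vec (sum_list (map fst ns))"
  shows "vnorm2 w \<le> (\<Sum>k<m. 1 / \<delta> ^ Suc k) *
     vnorm2 ((jordan_matrix ns - \<mu> \<cdot>\<^sub>m 1\<^sub>m (sum_list (map fst ns))) *\<^sub>v w)"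
proof -
  define N where "N = sum_list (map fst ns)"
  define D where "D = jordan_matrix ns - \<mu> \<cdot>\<^sub>m 1\<^sub>m N"
  have D: "D \<in> carrier_mat N N" unfolding D_def N_def by auto
  have w': "w \<in> carrier_vec N" using w unfolding N_def .
  define y where "y = D *\<^sub>v w"
  have y: "y \<in> carrier_vec N" unfolding y_def using D w' by auto
  have Dij: "D $$ (i,j) = (if j = i then jev ns i - \<mu> else 0) +
      (if j = Suc i then (if 0 < jrem ns i then 1 else 0) else 0)" if ij: "i < N" "j < N" for i j
  proof -
    have "D $$ (i,j) = jordan_matrix ns $$ (i,j) - \<mu> * (if i = j then 1 else 0)"
      unfolding D_def using ij N_def by simp
    thus ?thesis using jm_index[of i ns j] ij unfolding N_def by auto
  qed
  have yi: "y $ i = (jev ns i - \<mu>) * w $ i + (if 0 < jrem ns i then w $ Suc i else 0)"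
    if i: "i < N" for i
  proof -
    have "y $ i = (\<Sum>j<N. D $$ (i,j) * w $ j)" unfolding y_def using mv_index[of i D w] D w' i by simp
    also have "\<dots> = (\<Sum>j<N. (if j = i then (jev ns i - \<mu>) * w $ j else 0) +
        (if j = Suc i then (if 0 < jrem ns i then w $ j else 0) else 0))"
      by (intro sum.cong refl) (use i in \<open>auto simp: Dij algebra_simps\<close>)
    also have "\<dots> = (jev ns i - \<mu>) * w $ i + (if Suc i < N then (if 0 < jrem ns i then w $ Suc i else 0) else 0)"
      using i by (simp add: sum.distrib)
    also have "\<dots> = (jev ns i - \<mu>) * w $ i + (if 0 < jrem ns i then w $ Suc i else 0)"
      using jrem_suc[of i ns] i unfolding N_def by auto
    finally show ?thesis .
  qed
  have wi: "\<delta> * cmod (w $ i) \<le> cmod (y $ i) + (if 0 < jrem ns i then cmod (w $ Suc i) else 0)"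
    if i: "i < N" for i
  proof -
    obtain n where "(n, jev ns i) \<in> set ns" using jev_mem[of i ns] i unfolding N_def by auto
    hence dl: "\<delta> \<le> cmod (jev ns i - \<mu>)" using hyp by blast
    have eq: "(jev ns i - \<mu>) * w $ i = y $ i - (if 0 < jrem ns i then w $ Suc i else 0)"
      using yi[OF i] by simp
    have "\<delta> * cmod (w $ i) \<le> cmod (jev ns i - \<mu>) * cmod (w $ i)"
      by (rule mult_right_mono[OF dl]) simp
    also have "\<dots> = cmod (y $ i - (if 0 < jrem ns i then w $ Suc i else 0))"
      by (simp flip: eq add: norm_mult)
    also have "\<dots> \<le> cmod (y $ i) + cmod (if 0 < jrem ns i then w $ Suc i else 0)"
      by (rule norm_triangle_ineq4)
    finally show ?thesis by (simp split: if_splits)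
  qed
  define yy where "yy j = (if j < N then cmod (y $ j) else 0)" for j
  have yy0: "yy j \<ge> 0" for j unfolding yy_def by simp
  have claim: "\<forall>i<N. jrem ns i = r \<longrightarrow> cmod (w $ i) \<le> (\<Sum>k\<le>r. yy (i + k) / \<delta> ^ Suc k)" for r
  proof (induction r)
    case 0
    show ?case
    proof (intro allI impI)
      fix i assume i: "i < N" "jrem ns i = 0"
      have "\<delta> * cmod (w $ i) \<le> yy i" using wi[OF i(1)] i unfolding yy_def by simp
      thus "cmod (w $ i) \<le> (\<Sum>k\<le>0. yy (i + k) / \<delta> ^ Suc k)" using dpos
        by (simp add: field_simps)
    qed
  next
    case (Suc r)
    show ?case
    proof (intro allI impI)
      fix i assume i: "i < N" "jrem ns i = Suc r"
      from jrem_suc[of i ns] i have si: "Suc i < N" "jrem ns (Suc i) = r" unfolding N_def by auto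
      from Suc.IH si have ih: "cmod (w $ Suc i) \<le> (\<Sum>k\<le>r. yy (Suc i + k) / \<delta> ^ Suc k)" by blast
      have "\<delta> * cmod (w $ i) \<le> yy i + cmod (w $ Suc i)" using wi[OF i(1)] i unfolding yy_def by simp
      also have "\<dots> \<le> yy i + (\<Sum>k\<le>r. yy (Suc i + k) / \<delta> ^ Suc k)" using ih by simp
      finally have "cmod (w $ i) \<le> yy i / \<delta> + (\<Sum>k\<le>r. yy (Suc i + k) / \<delta> ^ Suc k) / \<delta>"
        using dpos by (simp add: field_simps)
      also have "\<dots> = yy (i + 0) / \<delta> ^ Suc 0 + (\<Sum>k\<le>r. yy (i + Suc k) / \<delta> ^ Suc (Suc k))"
        by (simp add: sum_divide_distrib mult.commute)
      also have "\<dots> = (\<Sum>k\<le>Suc r. yy (i + k) / \<delta> ^ Suc k)"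
        by (rule sum.atMost_Suc_shift[symmetric])
      finally show "cmod (w $ i) \<le> (\<Sum>k\<le>Suc r. yy (i + k) / \<delta> ^ Suc k)" .
    qed
  qed
  have wb: "cmod (w $ i) \<le> (\<Sum>k<m. yy (i + k) / \<delta> ^ Suc k)" if i: "i < N" for i
  proof -
    obtain n a where na: "(n,a) \<in> set ns" "jrem ns i < n" using jrem_lt[of i ns] i unfolding N_def by auto
    hence lt: "jrem ns i < m" using hyp[OF na(1)] by auto
    have "cmod (w $ i) \<le> (\<Sum>k\<le>jrem ns i. yy (i + k) / \<delta> ^ Suc k)" using claim i by blast
    also have "\<dots> \<le> (\<Sum>k<m. yy (i + k) / \<delta> ^ Suc k)"
      by (rule sum_mono2) (use lt yy0 dpos in auto)
    finally show ?thesis .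
  qed
  have "vnorm2 w = L2_set (\<lambda>i. cmod (w $ i)) {..<N}" using w' by (simp add: vn_L2)
  also have "\<dots> \<le> L2_set (\<lambda>i. \<Sum>k<m. yy (i + k) / \<delta> ^ Suc k) {..<N}"
    by (rule L2_set_mono) (use wb in auto)
  also have "\<dots> \<le> (\<Sum>k<m. L2_set (\<lambda>i. yy (i + k) / \<delta> ^ Suc k) {..<N})"
    by (rule L2_set_sum) simp
  also have "\<dots> = (\<Sum>k<m. (1 / \<delta> ^ Suc k) * L2_set (\<lambda>i. yy (i + k)) {..<N})"
  proof (intro sum.cong refl)
    fix k
    show "L2_set (\<lambda>i. yy (i + k) / \<delta> ^ Suc k) {..<N} = (1 / \<delta> ^ Suc k) * L2_set (\<lambda>i. yy (i + k)) {..<N}"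
      by (subst L2_set_right_distrib) (use dpos in auto)
  qed
  also have "\<dots> \<le> (\<Sum>k<m. (1 / \<delta> ^ Suc k) * L2_set yy {..<N})"
    by (intro sum_mono mult_left_mono L2_shift) (use dpos in \<open>auto simp: yy_def\<close>)
  also have "L2_set yy {..<N} = vnorm2 y"
    unfolding vn_L2 using y by (intro L2_set_cong) (auto simp: yy_def)
  finally show ?thesis unfolding y_def D_def N_def by (simp add: sum_distrib_right)
qed

lemma decomp_eig: assumes A: "A \<in> carrier_mat N N" and d: "jordan_decomp A P Q ns"
  and mem: "(n, lam) \<in> set ns"
  shows "eigenvalue A lam"
proof -
  have sim: "similar_mat A (jordan_matrix ns)" using d unfolding jordan_decomp_def similar_mat_def by blast
  have n0: "n > 0" using d mem unfolding jordan_decomp_def by auto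
  have "char_poly A = (\<Prod>(n, a)\<leftarrow>ns. [:- a, 1:] ^ n)"
    using char_poly_similar[OF sim] jordan_matrix_char_poly by simp
  moreover have "poly (\<Prod>(n, a)\<leftarrow>ns. [:- a, 1:] ^ n) lam = 0"
    unfolding poly_prod_list_zero_iff using mem n0 by force
  ultimately show ?thesis using eigenvalue_root_char_poly[OF A] by simp
qed

lemma decomp_jnf: "jordan_decomp A P Q ns \<Longrightarrow> jordan_nf A ns"
  unfolding jordan_decomp_def jordan_nf_def similar_mat_def by force

lemma eig_norm_le: assumes A: "A \<in> carrier_mat N N" and e: "eigenvalue A lam"
  and sA: "spec_norm A \<le> 1"
  shows "cmod lam \<le> 1"
proof -
  from e obtain v where v: "v \<in> carrier_vec N" "v \<noteq> 0\<^sub>v N" "A *\<^sub>v v = lam \<cdot>\<^sub>v v"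
    unfolding eigenvalue_def eigenvector_def using A by auto
  have pos: "vnorm2 v > 0" using v vn_zero_iff[of v] vn_nonneg[of v] by force
  have "cmod lam * vnorm2 v \<le> spec_norm A * vnorm2 v"
    using spec_le[of v A] v A by (simp add: vn_smult)
  also have "\<dots> \<le> 1 * vnorm2 v" using sA pos by (intro mult_right_mono) auto
  finally show ?thesis using pos by simp
qed

lemma shift_mat_vec: fixes A :: "complex mat" assumes A: "A \<in> carrier_mat N N" and v: "v \<in> carrier_vec N"
  shows "(A - \<mu> \<cdot>\<^sub>m 1\<^sub>m N) *\<^sub>v v = A *\<^sub>v v - \<mu> \<cdot>\<^sub>v v"
proof -
  have "(A - \<mu> \<cdot>\<^sub>m 1\<^sub>m N) *\<^sub>v v = A *\<^sub>v v - (\<mu> \<cdot>\<^sub>m 1\<^sub>m N) *\<^sub>v v"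
    by (rule minus_mult_distrib_mat_vec[of _ N N]) (use A v in auto)
  also have "(\<mu> \<cdot>\<^sub>m 1\<^sub>m N) *\<^sub>v v = \<mu> \<cdot>\<^sub>v v"
    using smult_mat_vec[of "1\<^sub>m N" N N v \<mu>] v by simp
  finally show ?thesis .
qed

lemma geo3: assumes "0 \<le> d" "d \<le> (2::real)" shows "(\<Sum>j<m. d ^ j) \<le> 3 ^ m"
proof (induction m)
  case 0 thus ?case by simp
next
  case (Suc m)
  have "d ^ m \<le> 2 ^ m" using assms by (intro power_mono) auto
  also have "(2::real) ^ m \<le> 3 ^ m" by (intro power_mono) auto
  finally have dm: "d ^ m \<le> 3 ^ m" .
  have "(\<Sum>j<Suc m. d ^ j) = (\<Sum>j<m. d ^ j) + d ^ m" by simp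
  also have "\<dots> \<le> 3 ^ m + 3 ^ m" using Suc dm by (rule add_mono)
  also have "\<dots> \<le> 3 ^ Suc m" by simp
  finally show ?case .
qed

lemma sum_shift_pow: assumes "d > (0::real)"
  shows "d ^ m * (\<Sum>k<m. 1 / d ^ Suc k) = (\<Sum>j<m. d ^ j)"
proof -
  have "d ^ m * (\<Sum>k<m. 1 / d ^ Suc k) = (\<Sum>k<m. d ^ (m - Suc k))"
    unfolding sum_distrib_left
    by (intro sum.cong refl) (use assms in \<open>simp add: power_diff\<close>)
  also have "\<dots> = (\<Sum>j<m. d ^ j)" by (rule sum.nat_diff_reindex)
  finally show ?thesis .
qed

lemma decomp_bound:
  fixes A :: "complex mat" and \<mu> :: complex and \<delta> :: real
  assumes A: "A \<in> carrier_mat N N" and N: "N > 0"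
    and d: "jordan_decomp A P' Q' ns"
    and dpos: "\<delta> > 0" and d2: "\<delta> \<le> 2"
    and hyp: "\<And>n a. (n,a) \<in> set ns \<Longrightarrow> \<delta> \<le> cmod (a - \<mu>) \<and> n \<le> m"
  shows "(\<delta> / 3) ^ m \<le> spec_norm P' * spec_norm Q' * sigma_min (A - \<mu> \<cdot>\<^sub>m 1\<^sub>m N)"
proof -
  define J where "J = jordan_matrix ns"
  have sw: "similar_mat_wit A J P' Q'" using d unfolding jordan_decomp_def J_def by auto
  from sw A have carr: "J \<in> carrier_mat N N" "P' \<in> carrier_mat N N" "Q' \<in> carrier_mat N N"
    and PQ: "P' * Q' = 1\<^sub>m N" and QP: "Q' * P' = 1\<^sub>m N" and AJ: "A = P' * J * Q'"
    unfolding similar_mat_wit_def Let_def by auto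
  have sN: "sum_list (map fst ns) = N" using carr(1) unfolding J_def carrier_mat_def by simp
  define B where "B = A - \<mu> \<cdot>\<^sub>m 1\<^sub>m N"
  have B: "B \<in> carrier_mat N N" unfolding B_def using A by auto
  obtain v where v: "v \<in> carrier_vec N" "vnorm2 v = 1" "sigma_min B = vnorm2 (B *\<^sub>v v)"
    using sigma_min_attained[OF B N] by blast
  define w where "w = Q' *\<^sub>v v"
  have w: "w \<in> carrier_vec N" unfolding w_def using carr v by auto
  have QA: "Q' * A = J * Q'"
  proof -
    have "Q' * A = Q' * (P' * J * Q')" using AJ by simp
    also have "\<dots> = (Q' * (P' * J)) * Q'"
      using assoc_mult_mat[of Q' N N "P' * J" N Q' N] carr by simp
    also have "Q' * (P' * J) = (Q' * P') * J"
      using assoc_mult_mat[of Q' N N P' N J N] carr by simp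
    also have "\<dots> = J" using QP carr by simp
    finally show ?thesis .
  qed
  have yeq: "(J - \<mu> \<cdot>\<^sub>m 1\<^sub>m N) *\<^sub>v w = Q' *\<^sub>v (B *\<^sub>v v)"
  proof -
    have "Q' *\<^sub>v (B *\<^sub>v v) = Q' *\<^sub>v (A *\<^sub>v v - \<mu> \<cdot>\<^sub>v v)"
      using shift_mat_vec[OF A v(1)] unfolding B_def by simp
    also have "\<dots> = Q' *\<^sub>v (A *\<^sub>v v) - Q' *\<^sub>v (\<mu> \<cdot>\<^sub>v v)"
      by (rule mult_minus_distrib_mat_vec[of _ N N]) (use carr A v in auto)
    also have "Q' *\<^sub>v (A *\<^sub>v v) = (Q' * A) *\<^sub>v v"
      using assoc_mult_mat_vec[of Q' N N A N v] carr A v by simp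
    also have "\<dots> = J *\<^sub>v w" unfolding QA w_def
      using assoc_mult_mat_vec[of J N N Q' N v] carr v by simp
    also have "Q' *\<^sub>v (\<mu> \<cdot>\<^sub>v v) = \<mu> \<cdot>\<^sub>v w" unfolding w_def
      using mult_mat_vec[of Q' N N v \<mu>] carr v by simp
    finally show ?thesis using shift_mat_vec[OF carr(1) w] by simp
  qed
  define S where "S = (\<Sum>k<m. 1 / \<delta> ^ Suc k)"
  have S0: "S \<ge> 0" unfolding S_def using dpos by (intro sum_nonneg) auto
  have wS: "vnorm2 w \<le> S * vnorm2 ((J - \<mu> \<cdot>\<^sub>m 1\<^sub>m N) *\<^sub>v w)"
  proof -
    have "w \<in> carrier_vec (sum_list (map fst ns))" using w sN by simp
    from jordan_bound[OF dpos hyp this] show ?thesis using sN unfolding S_def J_def by simp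
  qed
  have Qb: "vnorm2 (Q' *\<^sub>v (B *\<^sub>v v)) \<le> spec_norm Q' * vnorm2 (B *\<^sub>v v)"
    by (rule spec_le) (use carr B v in auto)
  have vPw: "P' *\<^sub>v w = v" unfolding w_def
    using assoc_mult_mat_vec[of P' N N Q' N v] carr v PQ by simp
  have Pb: "1 \<le> spec_norm P' * vnorm2 w"
    using spec_le[of w P'] carr w v vPw by simp
  have sP: "spec_norm P' \<ge> 0" and sQ: "spec_norm Q' \<ge> 0" using spec_nonneg carr N by auto
  define C where "C = sigma_min B"
  have C0: "C \<ge> 0" unfolding C_def v(3) by (rule vn_nonneg)
  have "1 \<le> spec_norm P' * vnorm2 w" by (rule Pb)
  also have "\<dots> \<le> spec_norm P' * (S * (spec_norm Q' * C))"
  proof (rule mult_left_mono[OF _ sP])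
    have "vnorm2 w \<le> S * vnorm2 (Q' *\<^sub>v (B *\<^sub>v v))" using wS yeq by simp
    also have "\<dots> \<le> S * (spec_norm Q' * C)" using Qb S0 v(3) unfolding C_def
      by (intro mult_left_mono) auto
    finally show "vnorm2 w \<le> S * (spec_norm Q' * C)" .
  qed
  finally have one: "1 \<le> S * (spec_norm P' * spec_norm Q' * C)" by (simp add: ac_simps)
  have dS: "\<delta> ^ m * S \<le> 3 ^ m"
    unfolding S_def sum_shift_pow[OF dpos] using dpos d2 by (intro geo3) auto
  have X0: "spec_norm P' * spec_norm Q' * C \<ge> 0" using sP sQ C0 by simp
  have "\<delta> ^ m \<le> \<delta> ^ m * (S * (spec_norm P' * spec_norm Q' * C))"
    using one dpos by simp
  also have "\<dots> = (\<delta> ^ m * S) * (spec_norm P' * spec_norm Q' * C)" by (simp add: ac_simps)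
  also have "\<dots> \<le> 3 ^ m * (spec_norm P' * spec_norm Q' * C)" by (rule mult_right_mono[OF dS X0])
  finally have "\<delta> ^ m \<le> 3 ^ m * (spec_norm P' * spec_norm Q' * C)" .
  thus ?thesis unfolding C_def B_def by (simp add: power_divide field_simps)
qed

theorem lemma1:
  fixes A P Q :: "complex mat" and N m_max :: nat and n_as :: "(nat \<times> complex) list"
    and K :: real and \<mu> :: complex
  assumes "A \<in> carrier_mat N N" and "N > 0"
    and "spec_norm A \<le> 1"
    and "jordan_decomp A P Q n_as"
    and "\<forall>(n, a) \<in> set n_as. n \<le> m_max"
    and "K \<ge> jordan_kappa A"
    and "cmod \<mu> \<le> 1"
  shows "sigma_min (A - \<mu> \<cdot>\<^sub>m 1\<^sub>m N) \<le> Min {cmod (\<mu> - lam) | n lam. (n, lam) \<in> set n_as}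
       \<and> Min {cmod (\<mu> - lam) | n lam. (n, lam) \<in> set n_as}
           \<le> 3 * (K * sigma_min (A - \<mu> \<cdot>\<^sub>m 1\<^sub>m N)) powr (1 / real m_max)"
proof -
  note A = assms(1) and N = assms(2) and sA = assms(3) and dec = assms(4)
    and mm = assms(5) and Kk = assms(6) and mu = assms(7)
  define B where "B = A - \<mu> \<cdot>\<^sub>m 1\<^sub>m N"
  have B: "B \<in> carrier_mat N N" unfolding B_def using A by auto
  define E where "E = {cmod (\<mu> - lam) | n lam. (n, lam) \<in> set n_as}"
  have Jc: "jordan_matrix n_as \<in> carrier_mat N N"
    using dec A unfolding jordan_decomp_def similar_mat_wit_def Let_def by auto
  hence "sum_list (map fst n_as) = N" unfolding carrier_mat_def by simp
  hence ne: "n_as \<noteq> []" using N by auto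
  have Eimg: "E = (\<lambda>p. cmod (\<mu> - snd p)) ` set n_as" unfolding E_def by force
  have finE: "finite E" unfolding Eimg by simp
  have neE: "E \<noteq> {}" unfolding Eimg using ne by simp
  define \<delta> where "\<delta> = Min E"
  have "\<delta> \<in> E" unfolding \<delta>_def using finE neE by (rule Min_in)
  then obtain n0 lam0 where mem0: "(n0, lam0) \<in> set n_as" and d0: "\<delta> = cmod (\<mu> - lam0)"
    unfolding E_def by auto
  have dle: "\<delta> \<le> cmod (\<mu> - a)" if "(n, a) \<in> set n_as" for n a
    unfolding \<delta>_def using finE that unfolding E_def by (intro Min_le) auto
  have eig0: "eigenvalue A lam0" by (rule decomp_eig[OF A dec mem0])
  have lam1: "cmod lam0 \<le> 1" by (rule eig_norm_le[OF A eig0 sA])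
  have d2: "\<delta> \<le> 2" unfolding d0 using norm_triangle_ineq4[of \<mu> lam0] mu lam1 by simp
  have dnn: "\<delta> \<ge> 0" unfolding d0 by simp
  have mpos: "m_max > 0"
  proof -
    have "n0 > 0" using dec mem0 unfolding jordan_decomp_def by auto
    moreover have "n0 \<le> m_max" using mm mem0 by auto
    ultimately show ?thesis by simp
  qed
  have part1: "sigma_min B \<le> \<delta>"
  proof -
    from eig0 obtain v where v: "v \<in> carrier_vec N" "v \<noteq> 0\<^sub>v N" "A *\<^sub>v v = lam0 \<cdot>\<^sub>v v"
      unfolding eigenvalue_def eigenvector_def using A by auto
    have pos: "vnorm2 v > 0" using v vn_zero_iff[of v] vn_nonneg[of v] by force
    define u where "u = (1 / of_real (vnorm2 v)) \<cdot>\<^sub>v v"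
    have u: "u \<in> carrier_vec N" "vnorm2 u = 1"
      using v pos by (auto simp: u_def vn_smult norm_divide)
    have "A *\<^sub>v u = (1 / of_real (vnorm2 v)) \<cdot>\<^sub>v (A *\<^sub>v v)"
      unfolding u_def by (rule mult_mat_vec[OF A v(1)])
    also have "\<dots> = (1 / of_real (vnorm2 v)) \<cdot>\<^sub>v (lam0 \<cdot>\<^sub>v v)" using v(3) by simp
    also have "\<dots> = lam0 \<cdot>\<^sub>v u" unfolding u_def by (intro eq_vecI) auto
    finally have Au: "A *\<^sub>v u = lam0 \<cdot>\<^sub>v u" .
    have "B *\<^sub>v u = A *\<^sub>v u - \<mu> \<cdot>\<^sub>v u" unfolding B_def by (rule shift_mat_vec[OF A u(1)])
    also have "\<dots> = (lam0 - \<mu>) \<cdot>\<^sub>v u" unfolding Au using u by (intro eq_vecI) (auto simp: algebra_simps)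
    finally have "vnorm2 (B *\<^sub>v u) = cmod (lam0 - \<mu>)" using u by (simp add: vn_smult)
    also have "\<dots> = \<delta>" unfolding d0 by (simp add: norm_minus_commute)
    finally show ?thesis using rayleigh[OF B N u] by simp
  qed
  define C where "C = sigma_min B"
  have part2: "\<delta> \<le> 3 * (K * C) powr (1 / real m_max)"
  proof (cases "\<delta> = 0")
    case True thus ?thesis by simp
  next
    case False
    hence dpos: "\<delta> > 0" using dnn by simp
    define SS where "SS = {spec_norm P * spec_norm Q | P Q n_as. jordan_decomp A P Q n_as}"
    have allS: "(\<delta> / 3) ^ m_max \<le> s * C" if s: "s \<in> SS" for s
    proof -
      from s obtain P' Q' ns where sdef: "s = spec_norm P' * spec_norm Q'" and d': "jordan_decomp A P' Q' ns"
        unfolding SS_def by auto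
      have seq: "set ns = set n_as" by (rule jordan_nf_unique[OF decomp_jnf[OF d'] decomp_jnf[OF dec]])
      have hyp: "\<delta> \<le> cmod (a - \<mu>) \<and> n \<le> m_max" if "(n, a) \<in> set ns" for n a
        using dle[of n a] mm that seq by (auto simp: norm_minus_commute)
      from decomp_bound[OF A N d' dpos d2 hyp] show ?thesis unfolding sdef C_def B_def by simp
    qed
    have neS: "SS \<noteq> {}" unfolding SS_def using dec by blast
    have dm: "(\<delta> / 3) ^ m_max > 0" using dpos by simp
    have Cpos: "C > 0"
    proof -
      have "C \<ge> 0" unfolding C_def using sigma_min_attained[OF B N] vn_nonneg by auto
      moreover obtain s where "s \<in> SS" using neS by auto
      with allS dm have "0 < s * C" by (meson less_le_trans)
      ultimately show ?thesis by (metis mult_zero_right order_less_irrefl order_le_less)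
    qed
    have "(\<delta> / 3) ^ m_max / C \<le> Inf SS"
      by (rule cInf_greatest[OF neS]) (use allS Cpos in \<open>simp add: divide_le_eq\<close>)
    also have "Inf SS = jordan_kappa A" unfolding SS_def jordan_kappa_def ..
    also have "\<dots> \<le> K" by (rule Kk)
    finally have KC: "(\<delta> / 3) ^ m_max \<le> K * C" using Cpos by (simp add: divide_le_eq)
    have "\<delta> / 3 = ((\<delta> / 3) ^ m_max) powr (1 / real m_max)"
    proof -
      have "(\<delta> / 3) ^ m_max = (\<delta> / 3) powr (real m_max)" using dpos by (simp add: powr_realpow)
      hence "((\<delta> / 3) ^ m_max) powr (1 / real m_max) = (\<delta> / 3) powr (real m_max * (1 / real m_max))"
        by (simp add: powr_powr)
      also have "\<dots> = \<delta> / 3" using mpos dpos by simp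
      finally show ?thesis by simp
    qed
    also have "\<dots> \<le> (K * C) powr (1 / real m_max)"
      by (rule powr_mono2) (use KC dm in auto)
    finally show ?thesis by simp
  qed
  show ?thesis using part1 part2 unfolding E_def \<delta>_def C_def B_def by simp
qed

end
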